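(* Let $g\ge1$ and $n\ge3$. \begin{enumerate} \item For all $1\le r\le n$: $r^r\,t_{g,n-r+1}^{r+1}\le t_{g,n}^2$, with equality iff $r=1$. \item If $(n,g)\neq(3,1)$, then for all $1\le r\le n-1$: $(r+1)^r\,t_{g,n-r}^{r+1}\le 2t_{g,n-1}^2$, with equality iff $r=1$ or $(g,r,n)\in\{(1,2,4),(2,2,3)\}$. \item If $(n,g)\notin\{(4,1),(4,2),(5,1)\}$, then for all $1\le r\le n-2$: $(r+2)^r\,t_{g,n-r-1}^{r+1}\le 3t_{g,n-2}^2$, with equality iff $r=1$ or $(g,r,n)=(3,2,4)$. \end{enumerate}
   Context: Sylvester sequences: $s_{g,1}=g+1$, $s_{g,k+1}=s_{g,k}(s_{g,k}-1)+1$, $t_{g,k}=s_{g,k}-1$. *)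

theory Defs
  imports Main
begin

(* Sylvester sequence s_{g,k}, indexed from k = 1: s_{g,1} = g+1,
   s_{g,k+1} = s_{g,k}(s_{g,k}-1)+1.  The value at k = 0 is an unused
   convention (set to g+1 as well). *)
fun sylv :: "nat \<Rightarrow> nat \<Rightarrow> nat" where
  "sylv g 0 = g + 1"
| "sylv g (Suc 0) = g + 1"
| "sylv g (Suc (Suc k)) = sylv g (Suc k) * (sylv g (Suc k) - 1) + 1"

definition tsylv :: "nat \<Rightarrow> nat \<Rightarrow> nat" where
  "tsylv g k = sylv g k - 1"

end

theory Submission
  imports Defs
begin



locale seq =
  fixes f :: "nat \<Rightarrow> nat" and a :: nat
  assumes rec: "\<And>j. f (Suc j) = f j * (f j + 1)" and f0: "f 0 = a" and a1: "a \<ge> 1"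
begin

lemma f_ge: "f j \<ge> a"
proof (induction j)
  case 0 then show ?case using f0 by simp
next
  case (Suc j) then show ?case by (simp add: rec)
qed

lemma f1: "f 1 = a * (a + 1)" using rec[of 0] f0 by simp

lemma f2: "f 2 \<ge> 6 * a"
proof -
  have h: "f 1 \<ge> 2 * a" using f1 a1 by simp
  have "f 2 = f 1 * (f 1 + 1)" using rec[of 1] by (simp add: numeral_2_eq_2)
  also have "\<dots> \<ge> (2*a) * 3" using h a1 by (intro mult_mono) auto
  finally show ?thesis by simp
qed

lemma f_big: "k \<ge> 3 \<Longrightarrow> f k \<ge> a * 2^(k+2)"
proof (induction k rule: dec_induct)
  case base
  have "f 3 = f 2 * (f 2 + 1)" using rec[of 2] by (simp add: numeral_3_eq_3 numeral_2_eq_2)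
  also have "\<dots> \<ge> (6*a) * 7" using f2 a1 by (intro mult_mono) auto
  finally show ?case by simp
next
  case (step k)
  have "f (Suc k) = f k * (f k + 1)" by (rule rec)
  also have "\<dots> \<ge> f k * 2" using f_ge[of k] a1 by (intro mult_mono) auto
  finally show ?case using step by simp
qed

lemma S: assumes c: "c \<le> 2" and k: "k \<ge> 1"
  shows "(k+2+c)^(k+2) * a < (k+1+c)^(k+1) * (f k + 1)^2"
proof -
  consider "k = 1" | "k = 2" | "k \<ge> 3" using k by linarith
  then show ?thesis
  proof cases
    case 1
    have h3: "a*(a+1)+1 \<ge> 3*a"
    proof -
      have "(a - 1)^2 \<ge> 0" by simp
      show ?thesis using a1 by (cases a) (auto simp: algebra_simps)
    qed
    have "(a*(a+1)+1)^2 \<ge> (3*a)^2" using h3 by (rule power_mono) simp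
    moreover have "(3*a)^2 \<ge> 9 * a" using a1 by (simp add: power2_eq_square)
    ultimately have q: "(a*(a+1)+1)^2 \<ge> 9*a" by linarith
    have cc: "(3+c)^3 < 9 * (2+c)^2" using c by (cases c rule: nat.exhaust; cases "c - 1" rule: nat.exhaust) (auto simp: eval_nat_numeral)
    have ee: "k+2+c = 3+c" "k+2 = 3" using 1 by auto
    have "(k+2+c)^(k+2) * a = (3+c)^3 * a" by (simp only: ee)
    also have "\<dots> < 9 * (2+c)^2 * a" using cc a1 by simp
    also have "\<dots> = (2+c)^2 * (9*a)" by simp
    also have "\<dots> \<le> (2+c)^2 * (a*(a+1)+1)^2" using q by simp
    also have "\<dots> = (k+1+c)^(k+1) * (f k + 1)^2" using 1 f1 by (simp only: ee) (simp add: numeral_2_eq_2)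
    finally show ?thesis .
  next
    case 2
    have "(f 2 + 1)^2 \<ge> (6*a)^2" using f2 by (intro power_mono) auto
    moreover have "(6*a)^2 \<ge> 36 * a" using a1 by (simp add: power2_eq_square)
    ultimately have q: "(f 2+1)^2 \<ge> 36*a" by linarith
    have cc: "(4+c)^4 < 36 * (3+c)^3" using c by (cases c rule: nat.exhaust; cases "c - 1" rule: nat.exhaust) (auto simp: eval_nat_numeral)
    have ee: "k+2+c = 4+c" "k+2 = 4" "k+1+c = 3+c" "k+1=3" using 2 by auto
    have "(k+2+c)^(k+2) * a = (4+c)^4 * a" by (simp only: ee)
    also have "\<dots> < 36 * (3+c)^3 * a" using cc a1 by simp
    also have "\<dots> = (3+c)^3 * (36*a)" by simp
    also have "\<dots> \<le> (3+c)^3 * (f 2+1)^2" using q by simp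
    also have "\<dots> = (k+1+c)^(k+1) * (f k + 1)^2" by (simp only: ee) (simp only: 2)
    finally show ?thesis .
  next
    case 3
    define B where "B = (2::nat)^(k+2)"
    have Bk: "B > k + 1 + c"
    proof -
      have "k + 3 < 2^(k+2)" by (induction k) auto
      then show ?thesis using c unfolding B_def by linarith
    qed
    have "(f k + 1)^2 \<ge> (a*B)^2" using f_big[OF 3] unfolding B_def by (intro power_mono) auto
    moreover have "(a*B)^2 \<ge> a * (B*B)" using a1 by (simp add: power2_eq_square)
    ultimately have q: "(f k + 1)^2 \<ge> a*(B*B)" by linarith
    have "(k+2+c)^(k+2) \<le> (2*(k+1+c))^(k+2)" by (intro power_mono) auto
    also have "\<dots> = B * (k+1+c) * (k+1+c)^(k+1)" 
    proof -
      have "k+2 = Suc (k+1)" by simp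
      then have "(k+1+c)^(k+2) = (k+1+c) * (k+1+c)^(k+1)" by (simp only: power_Suc)
      then show ?thesis unfolding B_def power_mult_distrib by (simp only: mult.assoc)
    qed
    finally have p: "(k+2+c)^(k+2) \<le> B * (k+1+c) * (k+1+c)^(k+1)" .
    have "(k+2+c)^(k+2) * a \<le> B * (k+1+c) * (k+1+c)^(k+1) * a" using p by simp
    also have "\<dots> < B * B * (k+1+c)^(k+1) * a"
    proof -
      have "B*(k+1+c) < B*B" using Bk by (intro mult_strict_left_mono) auto
      moreover have "(k+1+c)^(k+1) * a > 0" using a1 by simp
      ultimately show ?thesis by (metis mult.assoc mult_less_mono1)
    qed
    also have "\<dots> = (k+1+c)^(k+1) * (a*(B*B))" by simp
    also have "\<dots> \<le> (k+1+c)^(k+1) * (f k + 1)^2" using q by simp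
    finally show ?thesis .
  qed
qed

lemma step: assumes c: "c \<le> 2" and k: "k \<ge> 1"
  and le: "(k+1+c)^(k+1) * a^(k+2) \<le> (c+1) * f k ^ 2"
  shows "(k+2+c)^(k+2) * a^(k+3) < (c+1) * f (Suc k) ^ 2"
proof -
  let ?P = "(k+1+c)^(k+1)"
  have fs: "f (Suc k)^2 = (f k+1)^2 * f k^2" by (simp only: rec power_mult_distrib mult.commute)
  have Pp: "?P > 0" by simp
  have ap: "a^(k+2) > 0" using a1 by simp
  have e0: "k+3 = Suc (k+2)" by simp
  have e: "a^(k+3) = a * a^(k+2)" by (simp only: e0 power_Suc)
  have "?P * ((k+2+c)^(k+2) * a^(k+3)) = ((k+2+c)^(k+2) * a) * (?P * a^(k+2))" unfolding e by (simp add: algebra_simps)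
  also have "\<dots> < (?P * (f k + 1)^2) * (?P * a^(k+2))" using S[OF c k] ap Pp by (intro mult_strict_right_mono) (auto simp: mult.commute)
  also have "\<dots> \<le> (?P * (f k + 1)^2) * ((c+1) * f k ^ 2)" using le by simp
  also have "(?P * (f k + 1)^2) * ((c+1) * f k ^ 2) = ?P * ((c+1) * f (Suc k) ^ 2)" by (simp only: fs mult.assoc mult.commute mult.left_commute)
  finally show ?thesis using Pp by simp
qed

lemma iter: assumes c: "c \<le> 2" and k0: "k0 \<ge> 1"
  and le: "(k0+1+c)^(k0+1) * a^(k0+2) \<le> (c+1) * f k0 ^ 2"
  and kk: "k > k0"
  shows "(k+1+c)^(k+1) * a^(k+2) < (c+1) * f k ^ 2"
  using kk
proof (induction k rule: less_induct)
  case (less k)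
  then obtain j where j: "k = Suc j" "j \<ge> k0" by (cases k) auto
  have "(j+1+c)^(j+1) * a^(j+2) \<le> (c+1) * f j ^ 2"
  proof (cases "j = k0")
    case True then show ?thesis using le by simp
  next
    case False then show ?thesis using less.IH[of j] j by simp
  qed
  from step[OF c _ this] j k0 have r: "(j+2+c)^(j+2) * a^(j+3) < (c+1) * f (Suc j) ^ 2" by simp
  have eqs: "Suc j + 1 + c = j + 2 + c" "Suc j + 1 = j + 2" "Suc j + 2 = j + 3" by auto
  show ?case unfolding j(1) eqs using r .
qed

end




lemma sylv_ge: "sylv g k \<ge> 1"
  by (induction g k rule: sylv.induct) auto

lemma t_rec: "k \<ge> 1 \<Longrightarrow> tsylv g (Suc k) = tsylv g k * (tsylv g k + 1)"
proof -
  assume "k \<ge> 1"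
  then obtain j where j: "k = Suc j" by (cases k) auto
  have "sylv g k \<ge> 1" by (rule sylv_ge)
  then show ?thesis unfolding tsylv_def j by (simp add: algebra_simps)
qed

lemma t1: "tsylv g 1 = g" by (simp add: tsylv_def)
lemma t2: "tsylv g 2 = g * (g + 1)"
  using t_rec[of 1 g] t1 by (simp add: numeral_2_eq_2)

lemma t_mono: assumes "m \<ge> 1" "m \<le> m'" shows "tsylv g m \<le> tsylv g m'"
  using assms(2)
proof (induction m' rule: dec_induct)
  case base then show ?case by simp
next
  case (step k)
  have "tsylv g k \<le> tsylv g k * (tsylv g k + 1)" by simp
  then show ?case using t_rec[of k g] step assms(1) by simp
qed

lemma tvals: assumes "g \<ge> 1" "m \<ge> 1"
  shows "(m = 1 \<and> tsylv g m = g) \<or> (m = 2 \<and> tsylv g m = g * (g + 1)) \<or> (m \<ge> 3 \<and> tsylv g m \<ge> 6)"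
proof -
  consider "m = 1" | "m = 2" | "m \<ge> 3" using assms by linarith
  then show ?thesis
  proof cases
    case 3
    have "tsylv g 3 = tsylv g 2 * (tsylv g 2 + 1)" using t_rec[of 2 g] by (simp add: numeral_3_eq_3)
    also have "\<dots> \<ge> 2 * 3"
    proof -
      have "tsylv g 2 \<ge> 1 * 2" unfolding t2 using assms(1) by (intro mult_le_mono) auto
      then show ?thesis by (intro mult_le_mono) auto
    qed
    finally have "tsylv g 3 \<ge> 6" by simp
    with t_mono[of 3 m g] 3 show ?thesis by simp
  next
    case 1 then show ?thesis using t1[of g] by auto
  next
    case 2 then show ?thesis using t2[of g] by auto
  qed
qed

lemma t_ge1: assumes "g \<ge> 1" "m \<ge> 1" shows "tsylv g m \<ge> 1"
proof -
  have "tsylv g 1 \<le> tsylv g m" using assms(2) by (intro t_mono) auto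
  then show ?thesis using t1[of g] assms(1) by linarith
qed

lemma seq_inst: assumes "g \<ge> 1" "m \<ge> 1"
  shows "seq (\<lambda>j. tsylv g (m + j)) (tsylv g m)"
proof
  fix j show "tsylv g (m + Suc j) = tsylv g (m + j) * (tsylv g (m + j) + 1)"
    using t_rec[of "m+j" g] assms by simp
qed (use t_ge1[OF assms] in auto)

lemma gen_lt:
  fixes g m r c :: nat
  assumes g: "g \<ge> 1" and m: "m \<ge> 1" and r: "r \<ge> 3" and c: "c \<le> 2"
    and cond: "c \<le> 1 \<or> tsylv g m \<ge> 2 \<or> r \<ge> 4"
  shows "(r+c)^r * tsylv g m ^ (r+1) < (c+1) * tsylv g (m+r-1) ^ 2"
proof -
  interpret seq "\<lambda>j. tsylv g (m + j)" "tsylv g m" by (rule seq_inst[OF g m])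
  let ?a = "tsylv g m" and ?f = "\<lambda>j. tsylv g (m + j)"
  have a1: "?a \<ge> 1" by (rule t_ge1[OF g m])
  obtain k where k: "r = k + 1" using r by (cases r) auto
  have main: "(k+1+c)^(k+1) * ?a^(k+2) < (c+1) * ?f k ^ 2"
  proof -
    have F1: "?f 1 = ?a * (?a + 1)" by (rule f1)
    have F2: "?f 2 = ?f 1 * (?f 1 + 1)" using rec[of 1] by (simp add: numeral_2_eq_2)
    have F3: "?f 3 = ?f 2 * (?f 2 + 1)" using rec[of 2] by (simp add: numeral_2_eq_2 numeral_3_eq_3)
    have cc: "c = 0 \<or> c = 1 \<or> c = 2" using c by auto
    consider "?a \<ge> 3" | "?a = 2" | "?a = 1" using a1 by linarith
    then show ?thesis
    proof cases
      case big: 1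
      have base: "(1+1+c)^(1+1) * ?a^(1+2) \<le> (c+1) * ?f 1 ^ 2"
      proof -
        obtain b where b: "?a = b + 3" using big by (metis add.commute le_add_diff_inverse)
        have "(2+c)^2 * ?a \<le> (c+1) * (?a+1)^2"
          using cc unfolding b by (auto simp: power2_eq_square algebra_simps)
        then have "?a^2 * ((2+c)^2 * ?a) \<le> ?a^2 * ((c+1) * (?a+1)^2)" by simp
        then show ?thesis unfolding F1 by (simp add: power2_eq_square power3_eq_cube algebra_simps)
      qed
      show ?thesis
      proof (cases "k = 1")
        case True then show ?thesis using r k by simp
      next
        case False
        then show ?thesis using iter[OF c _ base, of k] r k by simp
      qed
    next
      case two: 2
      have v1: "?f 1 = 6" using two F1 by simp
      have v2: "?f 2 = 42" using v1 F2 by simp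
      have small: "c \<le> 1 \<Longrightarrow> (1+1+c)^(1+1) * ?a^(1+2) \<le> (c+1) * ?f 1 ^ 2"
        using two v1 cc by auto
      have base2: "(2+1+c)^(2+1) * ?a^(2+2) \<le> (c+1) * ?f 2 ^ 2"
        using two v2 cc by auto
      show ?thesis
      proof (cases "c \<le> 1")
        case True
        show ?thesis using iter[OF c _ small[OF True], of k] r k by simp
      next
        case False
        show ?thesis
        proof (cases "k = 2")
          case True
          have "(2+1+c)^(2+1) * ?a^(2+2) < (c+1) * ?f 2 ^ 2"
            using two v2 cc False by auto
          then show ?thesis using True by simp
        next
          case False
          then show ?thesis using iter[OF c _ base2, of k] r k by simp
        qed
      qed
    next
      case one: 3
      have v1: "?f 1 = 2" using one F1 by simp
      have v2: "?f 2 = 6" using v1 F2 by simp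
      have v3: "?f 3 = 42" using v2 F3 by simp
      have small: "c \<le> 1 \<Longrightarrow> (2+1+c)^(2+1) * ?a^(2+2) < (c+1) * ?f 2 ^ 2"
        using one v2 cc by auto
      have base3: "(3+1+c)^(3+1) * ?a^(3+2) < (c+1) * ?f 3 ^ 2"
        using one v3 cc by auto
      show ?thesis
      proof (cases "c \<le> 1")
        case True
        show ?thesis
        proof (cases "k = 2")
          case True then show ?thesis using small \<open>c \<le> 1\<close> by simp
        next
          case False
          then show ?thesis using iter[OF c _ less_imp_le[OF small[OF True]], of k] r k by simp
        qed
      next
        case False
        then have "k \<ge> 3" using cond one r k by auto
        show ?thesis
        proof (cases "k = 3")
          case True then show ?thesis using base3 by simp
        next
          case False
          then show ?thesis using iter[OF c _ less_imp_le[OF base3], of k] \<open>k \<ge> 3\<close> by simp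
        qed
      qed
    qed
  qed
  have e: "m + r - 1 = m + k" using k by simp
  have e2: "k + 1 + c = r + c" "k+2 = r+1" "k+1 = r" using k by auto
  show ?thesis using main unfolding e e2 .
qed




lemma gg: "(g::nat) \<ge> 2 \<Longrightarrow> g * (g + 1) \<ge> 6"
proof -
  assume "g \<ge> 2"
  then have "g * (g+1) \<ge> 2 * 3" by (intro mult_le_mono) auto
  then show ?thesis by simp
qed

lemma a_small: assumes g: "g \<ge> 1" and m: "m \<ge> 1"
  shows "(tsylv g m = 1 \<longleftrightarrow> g = 1 \<and> m = 1) \<and>
    (tsylv g m = 2 \<longleftrightarrow> (g = 2 \<and> m = 1) \<or> (g = 1 \<and> m = 2)) \<and>
    (tsylv g m = 3 \<longleftrightarrow> g = 3 \<and> m = 1)"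
proof -
  consider "m = 1" "tsylv g m = g" | "m = 2" "tsylv g m = g * (g + 1)" | "m \<ge> 3" "tsylv g m \<ge> 6"
    using tvals[OF g m] by blast
  then show ?thesis
  proof cases
    case 1 then show ?thesis by simp
  next
    case 2
    show ?thesis
    proof (cases "g = 1")
      case True then show ?thesis using 2 by simp
    next
      case False
      then have "tsylv g m \<ge> 6" using 2 gg[of g] g by simp
      then show ?thesis using 2 False by simp
    qed
  next
    case 3 then show ?thesis by simp
  qed
qed

lemma gen_r2: assumes g: "g \<ge> 1" and m: "m \<ge> 1"
  shows "(2+c)^2 * tsylv g m ^ 3 = tsylv g m ^ 2 * ((2+c)^2 * tsylv g m)"
    and "(c+1) * tsylv g (m+1) ^ 2 = tsylv g m ^ 2 * ((c+1) * (tsylv g m + 1)^2)"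
proof -
  show "(2+c)^2 * tsylv g m ^ 3 = tsylv g m ^ 2 * ((2+c)^2 * tsylv g m)"
    unfolding power3_eq_cube power2_eq_square[of "tsylv g m"] by (simp only: mult.assoc mult.commute mult.left_commute)
  have eq: "tsylv g (m+1) = tsylv g m * (tsylv g m + 1)" using t_rec[OF m, of g] by simp
  show "(c+1) * tsylv g (m+1) ^ 2 = tsylv g m ^ 2 * ((c+1) * (tsylv g m + 1)^2)"
    unfolding eq power_mult_distrib by (simp only: mult.assoc mult.commute mult.left_commute)
qed

lemma cmp: assumes "(x::nat) > 0"
  shows "x * y \<le> x * z \<longleftrightarrow> y \<le> z" "x * y = x * z \<longleftrightarrow> y = z"
  using assms by auto

lemma poly0: "(a::nat) \<ge> 1 \<Longrightarrow> 4 * a \<le> (a+1)^2 \<and> (4 * a = (a+1)^2 \<longleftrightarrow> a = 1)"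
proof -
  assume "a \<ge> 1"
  then obtain b where "a = b + 1" by (metis add.commute le_add_diff_inverse)
  then show ?thesis by (auto simp: power2_eq_square algebra_simps)
qed

lemma poly1: "(a::nat) \<ge> 2 \<Longrightarrow> 9 * a \<le> 2*(a+1)^2 \<and> (9 * a = 2*(a+1)^2 \<longleftrightarrow> a = 2)"
proof -
  assume "a \<ge> 2"
  then obtain b where "a = b + 2" by (metis add.commute le_add_diff_inverse)
  then show ?thesis by (auto simp: power2_eq_square algebra_simps)
qed

lemma poly2: "(a::nat) \<ge> 3 \<Longrightarrow> 16 * a \<le> 3*(a+1)^2 \<and> (16 * a = 3*(a+1)^2 \<longleftrightarrow> a = 3)"
proof -
  assume "a \<ge> 3"
  then obtain b where "a = b + 3" by (metis add.commute le_add_diff_inverse)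
  then show ?thesis by (auto simp: power2_eq_square algebra_simps)
qed




lemma part1:
  assumes g: "g \<ge> 1" and n: "n \<ge> 3" and r: "1 \<le> r" "r \<le> n"
  shows "r ^ r * tsylv g (n - r + 1) ^ (r + 1) \<le> tsylv g n ^ 2 \<and>
         (r ^ r * tsylv g (n - r + 1) ^ (r + 1) = tsylv g n ^ 2 \<longleftrightarrow> r = 1)"
proof -
  define m where "m = n - r + 1"
  have m1: "m \<ge> 1" unfolding m_def by simp
  consider "r = 1" | "r = 2" | "r \<ge> 3" using r by linarith
  then show ?thesis
  proof cases
    case 1 then show ?thesis using r n by (simp add: power2_eq_square)
  next
    case 2
    have mn: "m + 1 = n" "m \<ge> 2" using 2 n unfolding m_def by auto
    have a2: "tsylv g m \<ge> 2" using a_small[OF g m1] t_ge1[OF g m1] mn(2) by fastforce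
    have p: "4 * tsylv g m < (tsylv g m + 1)^2" using poly0[of "tsylv g m"] a2 by auto
    have pos: "tsylv g m ^ 2 > 0" using a2 by simp
    have nn: "(2+0::nat)^2 = 4" "(0+1::nat) = 1" by simp_all
    have L: "(2+0)^2 * tsylv g m ^ 3 = tsylv g m ^ 2 * (4 * tsylv g m)"
      using gen_r2(1)[OF g m1, of 0] by (simp only: nn)
    have R: "(0+1) * tsylv g (m+1) ^ 2 = tsylv g m ^ 2 * (1 * (tsylv g m + 1)^2)"
      using gen_r2(2)[OF g m1, of 0] by (simp only: nn)
    have X: "(2+0)^2 * tsylv g m ^ 3 < (0+1) * tsylv g (m+1) ^ 2"
      unfolding L R using p pos by simp
    have e: "r ^ r * tsylv g (n - r + 1) ^ (r + 1) = (2+0)^2 * tsylv g m ^ 3" using 2 m_def by simp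
    have e2: "tsylv g n ^ 2 = (0+1) * tsylv g (m+1) ^ 2" using mn by simp
    show ?thesis unfolding e e2 using X 2 by simp
  next
    case 3
    have "(r+0)^r * tsylv g m ^ (r+1) < (0+1) * tsylv g (m+r-1) ^ 2"
      by (rule gen_lt[OF g m1 3]) auto
    moreover have "m + r - 1 = n" unfolding m_def using r by simp
    ultimately show ?thesis using 3 unfolding m_def[symmetric] by simp
  qed
qed

lemma part2:
  assumes g: "g \<ge> 1" and n: "n \<ge> 3" and ex: "(n, g) \<noteq> (3, 1)" and r: "1 \<le> r" "r \<le> n - 1"
  shows "(r + 1) ^ r * tsylv g (n - r) ^ (r + 1) \<le> 2 * tsylv g (n - 1) ^ 2 \<and>
            ((r + 1) ^ r * tsylv g (n - r) ^ (r + 1) = 2 * tsylv g (n - 1) ^ 2 \<longleftrightarrow>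
               r = 1 \<or> (g, r, n) \<in> {(1, 2, 4), (2, 2, 3)})"
proof -
  define m where "m = n - r"
  have m1: "m \<ge> 1" unfolding m_def using r by simp
  consider "r = 1" | "r = 2" | "r \<ge> 3" using r by linarith
  then show ?thesis
  proof cases
    case 1
    then have e: "n - r = n - 1" "(r+1)^r = 2" "r+1 = 2" by simp_all
    show ?thesis unfolding e using 1 by simp
  next
    case 2
    have mn: "m + 1 = n - 1" "m = n - 2" using 2 n unfolding m_def by auto
    have "tsylv g m \<noteq> 1"
    proof
      assume "tsylv g m = 1"
      then have "g = 1" "m = 1" using a_small[OF g m1] by simp_all
      then show False using ex mn(2) n by simp
    qed
    then have a2: "tsylv g m \<ge> 2" using t_ge1[OF g m1] by linarith
    have p: "9 * tsylv g m \<le> 2 * (tsylv g m + 1)^2 \<and> (9 * tsylv g m = 2 * (tsylv g m + 1)^2 \<longleftrightarrow> tsylv g m = 2)"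
      using poly1[of "tsylv g m"] a2 by auto
    have iff: "tsylv g m = 2 \<longleftrightarrow> (g, r, n) \<in> {(1, 2, 4), (2, 2, 3)}"
      using a_small[OF g m1] mn(2) 2 n by auto
    have pos: "tsylv g m ^ 2 > 0" using a2 by simp
    have nn: "(2+1::nat)^2 = 9" "(1+1::nat) = 2" by simp_all
    have L: "(2+1)^2 * tsylv g m ^ 3 = tsylv g m ^ 2 * (9 * tsylv g m)"
      using gen_r2(1)[OF g m1, of 1] by (simp only: nn)
    have R: "(1+1) * tsylv g (m+1) ^ 2 = tsylv g m ^ 2 * (2 * (tsylv g m + 1)^2)"
      using gen_r2(2)[OF g m1, of 1] by (simp only: nn)
    have "(2+1)^2 * tsylv g m ^ 3 \<le> (1+1) * tsylv g (m+1) ^ 2 \<and>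
      ((2+1)^2 * tsylv g m ^ 3 = (1+1) * tsylv g (m+1) ^ 2 \<longleftrightarrow> tsylv g m = 2)"
      unfolding L R by (simp only: cmp[OF pos]) (rule p)
    moreover have e: "(r+1)^r * tsylv g (n-r)^(r+1) = (2+1)^2 * tsylv g m ^ 3" using 2 m_def by simp
    moreover have e2: "2 * tsylv g (n-1)^2 = (1+1) * tsylv g (m+1)^2" using mn by simp
    ultimately show ?thesis using iff 2 by simp
  next
    case 3
    have "(r+1)^r * tsylv g m ^ (r+1) < (1+1) * tsylv g (m+r-1) ^ 2"
      by (rule gen_lt[OF g m1 3]) auto
    moreover have "m + r - 1 = n - 1" unfolding m_def using r by simp
    ultimately show ?thesis using 3 unfolding m_def[symmetric] by simp
  qed
qed

lemma part3:
  assumes g: "g \<ge> 1" and n: "n \<ge> 3" and ex: "(n, g) \<notin> {(4, 1), (4, 2), (5, 1)}" and r: "1 \<le> r" "r \<le> n - 2"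
  shows "(r + 2) ^ r * tsylv g (n - r - 1) ^ (r + 1) \<le> 3 * tsylv g (n - 2) ^ 2 \<and>
            ((r + 2) ^ r * tsylv g (n - r - 1) ^ (r + 1) = 3 * tsylv g (n - 2) ^ 2 \<longleftrightarrow>
               r = 1 \<or> (g, r, n) = (3, 2, 4))"
proof -
  define m where "m = n - r - 1"
  have m1: "m \<ge> 1" unfolding m_def using r by simp
  consider "r = 1" | "r = 2" | "r \<ge> 3" using r by linarith
  then show ?thesis
  proof cases
    case 1
    then have e: "n - r - 1 = n - 2" "(r+2)^r = 3" "r+1 = 2" by simp_all
    show ?thesis unfolding e using 1 by simp
  next
    case 2
    have mn: "m + 1 = n - 2" "m = n - 3" using 2 r unfolding m_def by auto
    have "tsylv g m \<noteq> 1"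
    proof
      assume "tsylv g m = 1"
      then have g1: "g = 1" and "m = 1" using a_small[OF g m1] by simp_all
      then have "n = 4" using mn(2) r 2 by linarith
      then show False using ex g1 by simp
    qed
    moreover have "tsylv g m \<noteq> 2"
    proof
      assume "tsylv g m = 2"
      then have "(g = 2 \<and> m = 1) \<or> (g = 1 \<and> m = 2)" using a_small[OF g m1] by simp
      then show False using ex mn(2) r 2 by auto
    qed
    ultimately have a2: "tsylv g m \<ge> 3" using t_ge1[OF g m1] by linarith
    have p: "16 * tsylv g m \<le> 3 * (tsylv g m + 1)^2 \<and> (16 * tsylv g m = 3 * (tsylv g m + 1)^2 \<longleftrightarrow> tsylv g m = 3)"
      using poly2[of "tsylv g m"] a2 by auto
    have iff: "tsylv g m = 3 \<longleftrightarrow> (g, r, n) = (3, 2, 4)"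
      using a_small[OF g m1] mn(2) 2 r by auto
    have pos: "tsylv g m ^ 2 > 0" using a2 by simp
    have nn: "(2+2::nat)^2 = 16" "(2+1::nat) = 3" by simp_all
    have L: "(2+2)^2 * tsylv g m ^ 3 = tsylv g m ^ 2 * (16 * tsylv g m)"
      using gen_r2(1)[OF g m1, of 2] by (simp only: nn)
    have R: "(2+1) * tsylv g (m+1) ^ 2 = tsylv g m ^ 2 * (3 * (tsylv g m + 1)^2)"
      using gen_r2(2)[OF g m1, of 2] by (simp only: nn)
    have "(2+2)^2 * tsylv g m ^ 3 \<le> (2+1) * tsylv g (m+1) ^ 2 \<and>
      ((2+2)^2 * tsylv g m ^ 3 = (2+1) * tsylv g (m+1) ^ 2 \<longleftrightarrow> tsylv g m = 3)"
      unfolding L R by (simp only: cmp[OF pos]) (rule p)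
    moreover have e: "(r+2)^r * tsylv g (n-r-1)^(r+1) = (2+2)^2 * tsylv g m ^ 3" using 2 m_def by simp
    moreover have e2: "3 * tsylv g (n-2)^2 = (2+1) * tsylv g (m+1)^2" using mn by simp
    ultimately show ?thesis using iff 2 by simp
  next
    case 3
    have cond: "tsylv g m \<ge> 2 \<or> r \<ge> 4"
    proof (cases "r \<ge> 4")
      case False
      then have r3: "r = 3" using 3 by simp
      have "tsylv g m \<noteq> 1"
      proof
        assume "tsylv g m = 1"
        then have g1: "g = 1" and "m = 1" using a_small[OF g m1] by simp_all
        then have "n = 5" using r3 r unfolding m_def by linarith
        then show False using ex g1 by simp
      qed
      then show ?thesis using t_ge1[OF g m1] by linarith
    qed simp
    have "(r+2)^r * tsylv g m ^ (r+1) < (2+1) * tsylv g (m+r-1) ^ 2"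
      by (rule gen_lt[OF g m1 3]) (use cond in auto)
    moreover have "m + r - 1 = n - 2" unfolding m_def using r by simp
    ultimately show ?thesis using 3 unfolding m_def[symmetric] by simp
  qed
qed

theorem lemma3p11:
  fixes g n :: nat
  assumes "g \<ge> 1" and "n \<ge> 3"
  shows "(\<forall>r. 1 \<le> r \<and> r \<le> n \<longrightarrow>
            r ^ r * tsylv g (n - r + 1) ^ (r + 1) \<le> tsylv g n ^ 2 \<and>
            (r ^ r * tsylv g (n - r + 1) ^ (r + 1) = tsylv g n ^ 2 \<longleftrightarrow> r = 1))
       \<and> ((n, g) \<noteq> (3, 1) \<longrightarrow>
          (\<forall>r. 1 \<le> r \<and> r \<le> n - 1 \<longrightarrow>
            (r + 1) ^ r * tsylv g (n - r) ^ (r + 1) \<le> 2 * tsylv g (n - 1) ^ 2 \<and>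
            ((r + 1) ^ r * tsylv g (n - r) ^ (r + 1) = 2 * tsylv g (n - 1) ^ 2 \<longleftrightarrow>
               r = 1 \<or> (g, r, n) \<in> {(1, 2, 4), (2, 2, 3)})))
       \<and> ((n, g) \<notin> {(4, 1), (4, 2), (5, 1)} \<longrightarrow>
          (\<forall>r. 1 \<le> r \<and> r \<le> n - 2 \<longrightarrow>
            (r + 2) ^ r * tsylv g (n - r - 1) ^ (r + 1) \<le> 3 * tsylv g (n - 2) ^ 2 \<and>
            ((r + 2) ^ r * tsylv g (n - r - 1) ^ (r + 1) = 3 * tsylv g (n - 2) ^ 2 \<longleftrightarrow>
               r = 1 \<or> (g, r, n) = (3, 2, 4))))"
  using part1[OF assms] part2[OF assms] part3[OF assms] by blast


end
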